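(* Let $C$ be a triangulation of $\mathbb{S}^3$ whose $1$-skeleton has a proper $5$-colouring. Then $C$ has a proper face-colouring with five colours. On the other hand, there exists a triangulation of $\mathbb{S}^3$ that has no proper $4$-face-colouring but whose $1$-skeleton has a proper $5$-colouring.
   Context: A triangulation of $\mathbb{S}^3$ is a simplicial $2$-complex embedded in $\mathbb{S}^3$ such that every chamber (connected component of its complement) is a tetrahedron. Faces are $2$-cells. A face-colouring is proper if for every chamber, any two distinct faces on the boundary of that chamber receive different colours. *)

theory Defs
  imports "HOL-Analysis.Analysis"
begin

text \<open>A finite geometric simplicial 2-complex, realised in real^5 (every finite
  simplicial 2-complex has a linear realisation there).\<close>
definition simplicial_2_complex :: "(real^5) set set \<Rightarrow> bool" where
  "simplicial_2_complex K \<longleftrightarrow> simplicial_complex K \<and> (\<forall>S\<in>K. \<exists>n. n \<le> 2 \<and> n simplex S)"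

definition cvertices :: "(real^5) set set \<Rightarrow> (real^5) set" where
  "cvertices K = {v. {v} \<in> K}"

definition cedges :: "(real^5) set set \<Rightarrow> (real^5) set set" where
  "cedges K = {S \<in> K. 1 simplex S}"

definition cfaces :: "(real^5) set set \<Rightarrow> (real^5) set set" where
  "cfaces K = {S \<in> K. 2 simplex S}"

abbreviation S3 :: "(real^4) set" where
  "S3 \<equiv> sphere 0 1"

definition chambers :: "(real^5) set set \<Rightarrow> (real^5 \<Rightarrow> real^4) \<Rightarrow> (real^4) set set" where
  "chambers K f = components (S3 - f ` \<Union>K)"

text \<open>Boundary of a chamber (relative to the sphere; the sphere is closed).\<close>
definition chamber_boundary :: "(real^4) set \<Rightarrow> (real^4) set" where
  "chamber_boundary U = closure U - U"

definition face_on_boundary :: "(real^5 \<Rightarrow> real^4) \<Rightarrow> (real^5) set \<Rightarrow> (real^4) set \<Rightarrow> bool" where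
  "face_on_boundary f T U \<longleftrightarrow> f ` T \<subseteq> chamber_boundary U"

definition tetrahedral_chamber :: "(real^5) set set \<Rightarrow> (real^5 \<Rightarrow> real^4) \<Rightarrow> (real^4) set \<Rightarrow> bool" where
  "tetrahedral_chamber K f U \<longleftrightarrow>
     (\<exists>a b c d. card {a, b, c, d} = 4 \<and>
        convex hull {a, b, c} \<in> K \<and> convex hull {a, b, d} \<in> K \<and>
        convex hull {a, c, d} \<in> K \<and> convex hull {b, c, d} \<in> K \<and>
        chamber_boundary U = f ` (convex hull {a, b, c} \<union> convex hull {a, b, d} \<union>
                                  convex hull {a, c, d} \<union> convex hull {b, c, d})) \<and>
     closure U homeomorphic cball (0::real^3) 1"

definition triangulation_S3 :: "(real^5) set set \<Rightarrow> (real^5 \<Rightarrow> real^4) \<Rightarrow> bool" where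
  "triangulation_S3 K f \<longleftrightarrow>
     simplicial_2_complex K \<and>
     continuous_on (\<Union>K) f \<and> inj_on f (\<Union>K) \<and> f ` (\<Union>K) \<subseteq> S3 \<and>
     (\<forall>U \<in> chambers K f. tetrahedral_chamber K f U)"

definition proper_vertex_colouring :: "(real^5) set set \<Rightarrow> nat \<Rightarrow> (real^5 \<Rightarrow> nat) \<Rightarrow> bool" where
  "proper_vertex_colouring K k c \<longleftrightarrow>
     (\<forall>v \<in> cvertices K. c v < k) \<and>
     (\<forall>u \<in> cvertices K. \<forall>v \<in> cvertices K. u \<noteq> v \<and> closed_segment u v \<in> cedges K \<longrightarrow> c u \<noteq> c v)"

definition proper_face_colouring :: "(real^5) set set \<Rightarrow> (real^5 \<Rightarrow> real^4) \<Rightarrow> nat \<Rightarrow> ((real^5) set \<Rightarrow> nat) \<Rightarrow> bool" where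
  "proper_face_colouring K f k col \<longleftrightarrow>
     (\<forall>T \<in> cfaces K. col T < k) \<and>
     (\<forall>U \<in> chambers K f. \<forall>T \<in> cfaces K. \<forall>T' \<in> cfaces K.
        T \<noteq> T' \<and> face_on_boundary f T U \<and> face_on_boundary f T' U \<longrightarrow> col T \<noteq> col T')"

end

theory Submission
  imports Defs
begin


lemma tri2:
  assumes "2 simplex (convex hull {x,y,z::'a::euclidean_space})"
  shows "\<not> affine_dependent {x,y,z} \<and> x\<noteq>y \<and> x\<noteq>z \<and> y\<noteq>z"
proof -
  obtain C where C: "finite C" "\<not> affine_dependent C" "int (card C) = 2 + 1" "convex hull {x,y,z} = convex hull C"
    using assms unfolding simplex by blast
  have "C \<subseteq> {x,y,z}"
  proof
    fix v assume "v \<in> C"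
    then have "v extreme_point_of convex hull C" using C extreme_point_of_convex_hull_affine_independent by blast
    then have "v extreme_point_of convex hull {x,y,z}" using C by simp
    then show "v \<in> {x,y,z}" by (rule extreme_point_of_convex_hull)
  qed
  moreover have "card {x,y,z} \<le> 3" by (simp add: card_insert_le_m1)
  moreover have "card C = 3" using C by simp
  ultimately have "C = {x,y,z}" "card {x,y,z} = 3"
    by (metis card_seteq finite.emptyI finite.insertI le_antisym card_mono)+
  then show ?thesis using C by (auto simp: card_insert_if split: if_splits)
qed

lemma tri_in_list:
  assumes sc: "simplicial_complex K" and dim: "\<forall>S\<in>K. \<exists>n. n \<le> 2 \<and> n simplex S"
    and T: "T \<in> K" "2 simplex T" and H: "H \<subseteq> K" "T \<subseteq> \<Union>H"
  shows "T \<in> H"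
proof -
  have "aff_dim T = 2" using T aff_dim_simplex by blast
  then have "T \<noteq> {}" by auto
  moreover have "convex T" using T convex_simplex by blast
  ultimately obtain x where x: "x \<in> rel_interior T" using rel_interior_eq_empty by blast
  then have "x \<in> T" using rel_interior_subset by blast
  then obtain Hi where Hi: "Hi \<in> H" "x \<in> Hi" using H by blast
  have "(T \<inter> Hi) face_of T" using sc T Hi H unfolding simplicial_complex_def by blast
  then have "T \<inter> Hi = T" using face_of_disjoint_rel_interior x Hi \<open>x \<in> T\<close> by blast
  then have "T \<subseteq> Hi" by blast
  have "(Hi \<inter> T) face_of Hi" using sc T Hi H unfolding simplicial_complex_def by blast
  then have f: "T face_of Hi" using \<open>T \<subseteq> Hi\<close> by (simp add: Int_absorb1 inf_commute \<open>T \<inter> Hi = T\<close>)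
  obtain n where n: "n \<le> 2" "n simplex Hi" using dim Hi H by blast
  have "aff_dim Hi = n" using n aff_dim_simplex by blast
  show ?thesis
  proof (cases "T = Hi")
    case True then show ?thesis using Hi by simp
  next
    case False
    then have "aff_dim T < aff_dim Hi" using face_of_aff_dim_lt f convex_simplex n by blast
    then show ?thesis using \<open>aff_dim T = 2\<close> \<open>aff_dim Hi = n\<close> n by simp
  qed
qed

lemma sc_face: "simplicial_complex K \<Longrightarrow> S \<in> K \<Longrightarrow> F face_of S \<Longrightarrow> F \<in> K"
  unfolding simplicial_complex_def by blast

lemma edge_ok:
  assumes sc: "simplicial_complex K" and h: "convex hull {x,y,z} \<in> K"
    and ind: "\<not> affine_dependent {x,y,z}" and xy: "x \<noteq> y"
  shows "closed_segment x y \<in> cedges K \<and> x \<in> cvertices K \<and> y \<in> cvertices K"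
proof -
  have "closed_segment x y face_of convex hull {x,y,z}"
    unfolding segment_convex_hull face_of_convex_hull_affine_independent[OF ind]
    by (intro exI[of _ "{x,y}"]) auto
  then have e: "closed_segment x y \<in> K" using sc_face[OF sc h] by blast
  have "convex hull {x} face_of convex hull {x,y,z}"
    unfolding face_of_convex_hull_affine_independent[OF ind] by (intro exI[of _ "{x}"]) auto
  then have vx: "{x} \<in> K" using sc_face[OF sc h] by simp
  have "convex hull {y} face_of convex hull {x,y,z}"
    unfolding face_of_convex_hull_affine_independent[OF ind] by (intro exI[of _ "{y}"]) auto
  then have vy: "{y} \<in> K" using sc_face[OF sc h] by simp
  have "1 simplex closed_segment x y" using one_simplex_segment[OF xy] .
  then show ?thesis using e vx vy by (simp add: cedges_def cvertices_def)
qed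

lemma modlem: fixes a r s :: nat assumes "r < 5" "s < 5" "r \<noteq> s" shows "(a + r) mod 5 \<noteq> (a + s) mod 5"
proof -
  have m: "x mod 5 = (if x < 5 then x else x - 5)" if "x < 10" for x::nat
    using that by (simp add: mod_if le_mod_geq)
  have e1: "(a + r) mod 5 = (a mod 5 + r) mod 5" "(a + s) mod 5 = (a mod 5 + s) mod 5"
    by (simp_all add: mod_add_left_eq)
  have "a mod 5 < 5" by simp
  then show ?thesis unfolding e1 using m[of "a mod 5 + r"] m[of "a mod 5 + s"] assms by auto
qed

definition fcol :: "(real^5 \<Rightarrow> nat) \<Rightarrow> (real^5) set \<Rightarrow> nat" where
  "fcol c T = (\<Sum>v\<in>{v. v extreme_point_of T}. c v) mod 5"

lemma fcol_tri:
  assumes "\<not> affine_dependent {x,y,z}" "x\<noteq>y" "x\<noteq>z" "y\<noteq>z"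
  shows "fcol c (convex hull {x,y,z}) = (c x + c y + c z) mod 5"
proof -
  have "{v. v extreme_point_of convex hull {x,y,z}} = {x,y,z}"
    using extreme_point_of_convex_hull_affine_independent[OF assms(1)] by blast
  then show ?thesis using assms by (simp add: fcol_def add.assoc)
qed

lemma pair:
  assumes sc: "simplicial_complex K" and pc: "proper_vertex_colouring K 5 c"
    and h: "convex hull{p,q,r} \<in> K" "convex hull {p,q,s} \<in> K" "convex hull {p,r,s} \<in> K" "convex hull {q,r,s} \<in> K"
    and s2: "2 simplex (convex hull {p,q,r})" "2 simplex (convex hull {p,q,s})" and rs: "r \<noteq> s"
  shows "fcol c (convex hull {p,q,r}) \<noteq> fcol c (convex hull {p,q,s})"
proof -
  have A: "\<not> affine_dependent {p,q,r}" "p\<noteq>q" "p\<noteq>r" "q\<noteq>r" using tri2[OF s2(1)] by auto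
  have B: "\<not> affine_dependent {p,q,s}" "p\<noteq>s" "q\<noteq>s" using tri2[OF s2(2)] by auto
  have ok: "c u \<noteq> c v \<and> c u < 5 \<and> c v < 5" if "closed_segment u v \<in> cedges K" "u \<in> cvertices K" "v \<in> cvertices K" "u \<noteq> v" for u v
    using pc that unfolding proper_vertex_colouring_def by blast
  have e1: "{r,p,q} = {p,q,r}" "{s,p,q} = {p,q,s}" "{r,s,p} = {p,r,s}" "{r,s,q} = {q,r,s}" "{r,s,q} = {q,r,s}"
     "{r,q,p} = {p,q,r}" by auto
  have h1: "convex hull {r,p,q} \<in> K" "convex hull {s,p,q} \<in> K" using h(1,2) unfolding e1 .
  have a1: "\<not> affine_dependent {r,p,q}" "\<not> affine_dependent {s,p,q}" using A(1) B(1) unfolding e1 .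
  have E1: "closed_segment r p \<in> cedges K \<and> r \<in> cvertices K \<and> p \<in> cvertices K"
    using edge_ok[OF sc h1(1) a1(1)] A(3) by blast
  have E2: "closed_segment s p \<in> cedges K \<and> s \<in> cvertices K \<and> p \<in> cvertices K"
    using edge_ok[OF sc h1(2) a1(2)] B(2) by blast
  have E3: "closed_segment p q \<in> cedges K \<and> p \<in> cvertices K \<and> q \<in> cvertices K"
    using edge_ok[OF sc h(1) A(1)] A(2) by blast
  have vr: "r \<in> cvertices K" "s \<in> cvertices K" "p \<in> cvertices K" "q \<in> cvertices K"
    using E1 E2 E3 by blast+
  have crs: "c r \<noteq> c s"
  proof (cases "affine_dependent {p,r,s}")
    case False
    have "convex hull {r,s,p} \<in> K" "\<not> affine_dependent {r,s,p}" using h(3) False unfolding e1 .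
    then have "closed_segment r s \<in> cedges K" using edge_ok[OF sc _ _ rs] by blast
    then show ?thesis using ok vr rs by blast
  next
    case True
    note T1 = True
    show ?thesis
    proof (cases "affine_dependent {q,r,s}")
      case False
      have "convex hull {r,s,q} \<in> K" "\<not> affine_dependent {r,s,q}" using h(4) False unfolding e1 .
      then have "closed_segment r s \<in> cedges K" using edge_ok[OF sc _ _ rs] by blast
      then show ?thesis using ok vr rs by blast
    next
      case True
      have "collinear {p,r,s}" "collinear {r,s,q}" using T1 True affine_dependent_imp_collinear_3 unfolding e1 by auto
      then have "collinear {p,r,q}" using collinear_3_trans[of p r s q] rs by blast
      then have "collinear {r,q,p}" by (simp add: insert_commute)
      then have "affine_dependent {p,q,r}" using collinear_3_eq_affine_dependent[of r q p] A unfolding e1 by blast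
      then show ?thesis using A by blast
    qed
  qed
  have "c r < 5" "c s < 5" using pc vr unfolding proper_vertex_colouring_def by auto
  then have "(c p + c q + c r) mod 5 \<noteq> (c p + c q + c s) mod 5" using crs
    by (rule modlem)
  then show ?thesis using fcol_tri A B by simp
qed

lemma card4_distinct:
  assumes "card {a,b,c,d} = 4"
  shows "a\<noteq>b \<and> a\<noteq>c \<and> a\<noteq>d \<and> b\<noteq>c \<and> b\<noteq>d \<and> c\<noteq>d"
proof -
  have le: "card {x,y,z} \<le> 3" for x y z :: 'a by (simp add: card_insert_if)
  show ?thesis
  proof (intro conjI notI)
    assume "a = b" then have "{a,b,c,d} = {b,c,d}" by auto then show False using assms le[of b c d] by simp
  next
    assume "a = c" then have "{a,b,c,d} = {b,c,d}" by auto then show False using assms le[of b c d] by simp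
  next
    assume "a = d" then have "{a,b,c,d} = {b,c,d}" by auto then show False using assms le[of b c d] by simp
  next
    assume "b = c" then have "{a,b,c,d} = {a,c,d}" by auto then show False using assms le[of a c d] by simp
  next
    assume "b = d" then have "{a,b,c,d} = {a,c,d}" by auto then show False using assms le[of a c d] by simp
  next
    assume "c = d" then have "{a,b,c,d} = {a,b,d}" by auto then show False using assms le[of a b d] by simp
  qed
qed

lemma pair4:
  assumes sc: "simplicial_complex K" and pc: "proper_vertex_colouring K 5 c"
    and hA: "convex hull {a,b,c'} \<in> K" and hB: "convex hull {a,b,d} \<in> K"
    and hC: "convex hull {a,c',d} \<in> K" and hD: "convex hull {b,c',d} \<in> K"
    and dist: "a\<noteq>b" "a\<noteq>c'" "a\<noteq>d" "b\<noteq>c'" "b\<noteq>d" "c'\<noteq>d"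
    and T: "T = convex hull {a,b,c'} \<or> T = convex hull {a,b,d} \<or> T = convex hull {a,c',d} \<or> T = convex hull {b,c',d}"
    and T': "T' = convex hull {a,b,c'} \<or> T' = convex hull {a,b,d} \<or> T' = convex hull {a,c',d} \<or> T' = convex hull {b,c',d}"
    and ne: "T \<noteq> T'" and s: "2 simplex T" and s': "2 simplex T'"
  shows "fcol c T \<noteq> fcol c T'"
proof -
  have GAB: "fcol c (convex hull {a,b,c'}) \<noteq> fcol c (convex hull {a,b,d})"
    if "2 simplex (convex hull {a,b,c'})" "2 simplex (convex hull {a,b,d})"
  proof -
    have h0: "convex hull {a,b,c'} \<in> K" by (rule hA)
    have h1: "convex hull {a,b,d} \<in> K" by (rule hB)
    have h2: "convex hull {a,c',d} \<in> K" by (rule hC)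
    have h3: "convex hull {b,c',d} \<in> K" by (rule hD)
    have s0: "2 simplex (convex hull {a,b,c'})" by (rule that(1))
    have e0: "fcol c (convex hull {a,b,c'}) = fcol c (convex hull {a,b,c'})" by (rule refl)
    have s1: "2 simplex (convex hull {a,b,d})" by (rule that(2))
    have e1: "fcol c (convex hull {a,b,d}) = fcol c (convex hull {a,b,d})" by (rule refl)
    have rs: "c' \<noteq> d" using dist by simp
    have "fcol c (convex hull {a,b,c'}) \<noteq> fcol c (convex hull {a,b,d})"
      by (rule pair[OF sc pc h0 h1 h2 h3 s0 s1 rs])
    then show ?thesis using e0 e1 by simp
  qed
  have GBA: "fcol c (convex hull {a,b,d}) \<noteq> fcol c (convex hull {a,b,c'})"
    if "2 simplex (convex hull {a,b,d})" "2 simplex (convex hull {a,b,c'})"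
    using GAB that by (metis not_sym)
  have GAC: "fcol c (convex hull {a,b,c'}) \<noteq> fcol c (convex hull {a,c',d})"
    if "2 simplex (convex hull {a,b,c'})" "2 simplex (convex hull {a,c',d})"
  proof -
    have "{a,c',b} = {a,b,c'}" by auto
    then have h0: "convex hull {a,c',b} \<in> K" using hA by simp
    have h1: "convex hull {a,c',d} \<in> K" by (rule hC)
    have h2: "convex hull {a,b,d} \<in> K" by (rule hB)
    have "{c',b,d} = {b,c',d}" by auto
    then have h3: "convex hull {c',b,d} \<in> K" using hD by simp
    have q0: "{a,c',b} = {a,b,c'}" by auto
    then have s0: "2 simplex (convex hull {a,c',b})" using that(1) by simp
    have e0: "fcol c (convex hull {a,c',b}) = fcol c (convex hull {a,b,c'})" using q0 by simp
    have s1: "2 simplex (convex hull {a,c',d})" by (rule that(2))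
    have e1: "fcol c (convex hull {a,c',d}) = fcol c (convex hull {a,c',d})" by (rule refl)
    have rs: "b \<noteq> d" using dist by simp
    have "fcol c (convex hull {a,c',b}) \<noteq> fcol c (convex hull {a,c',d})"
      by (rule pair[OF sc pc h0 h1 h2 h3 s0 s1 rs])
    then show ?thesis using e0 e1 by simp
  qed
  have GCA: "fcol c (convex hull {a,c',d}) \<noteq> fcol c (convex hull {a,b,c'})"
    if "2 simplex (convex hull {a,c',d})" "2 simplex (convex hull {a,b,c'})"
    using GAC that by (metis not_sym)
  have GAD: "fcol c (convex hull {a,b,c'}) \<noteq> fcol c (convex hull {b,c',d})"
    if "2 simplex (convex hull {a,b,c'})" "2 simplex (convex hull {b,c',d})"
  proof -
    have "{b,c',a} = {a,b,c'}" by auto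
    then have h0: "convex hull {b,c',a} \<in> K" using hA by simp
    have h1: "convex hull {b,c',d} \<in> K" by (rule hD)
    have "{b,a,d} = {a,b,d}" by auto
    then have h2: "convex hull {b,a,d} \<in> K" using hB by simp
    have "{c',a,d} = {a,c',d}" by auto
    then have h3: "convex hull {c',a,d} \<in> K" using hC by simp
    have q0: "{b,c',a} = {a,b,c'}" by auto
    then have s0: "2 simplex (convex hull {b,c',a})" using that(1) by simp
    have e0: "fcol c (convex hull {b,c',a}) = fcol c (convex hull {a,b,c'})" using q0 by simp
    have s1: "2 simplex (convex hull {b,c',d})" by (rule that(2))
    have e1: "fcol c (convex hull {b,c',d}) = fcol c (convex hull {b,c',d})" by (rule refl)
    have rs: "a \<noteq> d" using dist by simp
    have "fcol c (convex hull {b,c',a}) \<noteq> fcol c (convex hull {b,c',d})"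
      by (rule pair[OF sc pc h0 h1 h2 h3 s0 s1 rs])
    then show ?thesis using e0 e1 by simp
  qed
  have GDA: "fcol c (convex hull {b,c',d}) \<noteq> fcol c (convex hull {a,b,c'})"
    if "2 simplex (convex hull {b,c',d})" "2 simplex (convex hull {a,b,c'})"
    using GAD that by (metis not_sym)
  have GBC: "fcol c (convex hull {a,b,d}) \<noteq> fcol c (convex hull {a,c',d})"
    if "2 simplex (convex hull {a,b,d})" "2 simplex (convex hull {a,c',d})"
  proof -
    have "{a,d,b} = {a,b,d}" by auto
    then have h0: "convex hull {a,d,b} \<in> K" using hB by simp
    have "{a,d,c'} = {a,c',d}" by auto
    then have h1: "convex hull {a,d,c'} \<in> K" using hC by simp
    have h2: "convex hull {a,b,c'} \<in> K" by (rule hA)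
    have "{d,b,c'} = {b,c',d}" by auto
    then have h3: "convex hull {d,b,c'} \<in> K" using hD by simp
    have q0: "{a,d,b} = {a,b,d}" by auto
    then have s0: "2 simplex (convex hull {a,d,b})" using that(1) by simp
    have e0: "fcol c (convex hull {a,d,b}) = fcol c (convex hull {a,b,d})" using q0 by simp
    have q1: "{a,d,c'} = {a,c',d}" by auto
    then have s1: "2 simplex (convex hull {a,d,c'})" using that(2) by simp
    have e1: "fcol c (convex hull {a,d,c'}) = fcol c (convex hull {a,c',d})" using q1 by simp
    have rs: "b \<noteq> c'" using dist by simp
    have "fcol c (convex hull {a,d,b}) \<noteq> fcol c (convex hull {a,d,c'})"
      by (rule pair[OF sc pc h0 h1 h2 h3 s0 s1 rs])
    then show ?thesis using e0 e1 by simp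
  qed
  have GCB: "fcol c (convex hull {a,c',d}) \<noteq> fcol c (convex hull {a,b,d})"
    if "2 simplex (convex hull {a,c',d})" "2 simplex (convex hull {a,b,d})"
    using GBC that by (metis not_sym)
  have GBD: "fcol c (convex hull {a,b,d}) \<noteq> fcol c (convex hull {b,c',d})"
    if "2 simplex (convex hull {a,b,d})" "2 simplex (convex hull {b,c',d})"
  proof -
    have "{b,d,a} = {a,b,d}" by auto
    then have h0: "convex hull {b,d,a} \<in> K" using hB by simp
    have "{b,d,c'} = {b,c',d}" by auto
    then have h1: "convex hull {b,d,c'} \<in> K" using hD by simp
    have "{b,a,c'} = {a,b,c'}" by auto
    then have h2: "convex hull {b,a,c'} \<in> K" using hA by simp
    have "{d,a,c'} = {a,c',d}" by auto
    then have h3: "convex hull {d,a,c'} \<in> K" using hC by simp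
    have q0: "{b,d,a} = {a,b,d}" by auto
    then have s0: "2 simplex (convex hull {b,d,a})" using that(1) by simp
    have e0: "fcol c (convex hull {b,d,a}) = fcol c (convex hull {a,b,d})" using q0 by simp
    have q1: "{b,d,c'} = {b,c',d}" by auto
    then have s1: "2 simplex (convex hull {b,d,c'})" using that(2) by simp
    have e1: "fcol c (convex hull {b,d,c'}) = fcol c (convex hull {b,c',d})" using q1 by simp
    have rs: "a \<noteq> c'" using dist by simp
    have "fcol c (convex hull {b,d,a}) \<noteq> fcol c (convex hull {b,d,c'})"
      by (rule pair[OF sc pc h0 h1 h2 h3 s0 s1 rs])
    then show ?thesis using e0 e1 by simp
  qed
  have GDB: "fcol c (convex hull {b,c',d}) \<noteq> fcol c (convex hull {a,b,d})"
    if "2 simplex (convex hull {b,c',d})" "2 simplex (convex hull {a,b,d})"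
    using GBD that by (metis not_sym)
  have GCD: "fcol c (convex hull {a,c',d}) \<noteq> fcol c (convex hull {b,c',d})"
    if "2 simplex (convex hull {a,c',d})" "2 simplex (convex hull {b,c',d})"
  proof -
    have "{c',d,a} = {a,c',d}" by auto
    then have h0: "convex hull {c',d,a} \<in> K" using hC by simp
    have "{c',d,b} = {b,c',d}" by auto
    then have h1: "convex hull {c',d,b} \<in> K" using hD by simp
    have "{c',a,b} = {a,b,c'}" by auto
    then have h2: "convex hull {c',a,b} \<in> K" using hA by simp
    have "{d,a,b} = {a,b,d}" by auto
    then have h3: "convex hull {d,a,b} \<in> K" using hB by simp
    have q0: "{c',d,a} = {a,c',d}" by auto
    then have s0: "2 simplex (convex hull {c',d,a})" using that(1) by simp
    have e0: "fcol c (convex hull {c',d,a}) = fcol c (convex hull {a,c',d})" using q0 by simp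
    have q1: "{c',d,b} = {b,c',d}" by auto
    then have s1: "2 simplex (convex hull {c',d,b})" using that(2) by simp
    have e1: "fcol c (convex hull {c',d,b}) = fcol c (convex hull {b,c',d})" using q1 by simp
    have rs: "a \<noteq> b" using dist by simp
    have "fcol c (convex hull {c',d,a}) \<noteq> fcol c (convex hull {c',d,b})"
      by (rule pair[OF sc pc h0 h1 h2 h3 s0 s1 rs])
    then show ?thesis using e0 e1 by simp
  qed
  have GDC: "fcol c (convex hull {b,c',d}) \<noteq> fcol c (convex hull {a,c',d})"
    if "2 simplex (convex hull {b,c',d})" "2 simplex (convex hull {a,c',d})"
    using GCD that by (metis not_sym)
  show ?thesis
    using T
  proof (elim disjE)
    assume tX: "T = convex hull {a,b,c'}"
    show ?thesis using T'
    proof (elim disjE)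
      assume "T' = convex hull {a,b,c'}" then show ?thesis using tX ne by simp
    next
      assume "T' = convex hull {a,b,d}" then show ?thesis using tX GAB s s' by simp
    next
      assume "T' = convex hull {a,c',d}" then show ?thesis using tX GAC s s' by simp
    next
      assume "T' = convex hull {b,c',d}" then show ?thesis using tX GAD s s' by simp
    qed
  next
    assume tX: "T = convex hull {a,b,d}"
    show ?thesis using T'
    proof (elim disjE)
      assume "T' = convex hull {a,b,c'}" then show ?thesis using tX GBA s s' by simp
    next
      assume "T' = convex hull {a,b,d}" then show ?thesis using tX ne by simp
    next
      assume "T' = convex hull {a,c',d}" then show ?thesis using tX GBC s s' by simp
    next
      assume "T' = convex hull {b,c',d}" then show ?thesis using tX GBD s s' by simp
    qed
  next
    assume tX: "T = convex hull {a,c',d}"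
    show ?thesis using T'
    proof (elim disjE)
      assume "T' = convex hull {a,b,c'}" then show ?thesis using tX GCA s s' by simp
    next
      assume "T' = convex hull {a,b,d}" then show ?thesis using tX GCB s s' by simp
    next
      assume "T' = convex hull {a,c',d}" then show ?thesis using tX ne by simp
    next
      assume "T' = convex hull {b,c',d}" then show ?thesis using tX GCD s s' by simp
    qed
  next
    assume tX: "T = convex hull {b,c',d}"
    show ?thesis using T'
    proof (elim disjE)
      assume "T' = convex hull {a,b,c'}" then show ?thesis using tX GDA s s' by simp
    next
      assume "T' = convex hull {a,b,d}" then show ?thesis using tX GDB s s' by simp
    next
      assume "T' = convex hull {a,c',d}" then show ?thesis using tX GDC s s' by simp
    next
      assume "T' = convex hull {b,c',d}" then show ?thesis using tX ne by simp
    qed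
  qed
qed

lemma part1:
  assumes tr: "triangulation_S3 K f" and pc: "proper_vertex_colouring K 5 c"
  shows "proper_face_colouring K f 5 (fcol c)"
  unfolding proper_face_colouring_def
proof (intro conjI ballI impI)
  fix T assume "T \<in> cfaces K" show "fcol c T < 5" by (simp add: fcol_def)
next
  fix U T T' assume U: "U \<in> chambers K f" and T: "T \<in> cfaces K" and T': "T' \<in> cfaces K"
    and h: "T \<noteq> T' \<and> face_on_boundary f T U \<and> face_on_boundary f T' U"
  have sc2: "simplicial_2_complex K" and inj: "inj_on f (\<Union>K)" and tet: "tetrahedral_chamber K f U"
    using tr U unfolding triangulation_S3_def by blast+
  have sc: "simplicial_complex K" and dim: "\<forall>S\<in>K. \<exists>n. n \<le> 2 \<and> n simplex S"
    using sc2 unfolding simplicial_2_complex_def by blast+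
  obtain a b c' d where cd: "card {a, b, c', d} = 4"
    and hA: "convex hull {a, b, c'} \<in> K" and hB: "convex hull {a, b, d} \<in> K"
    and hC: "convex hull {a, c', d} \<in> K" and hD: "convex hull {b, c', d} \<in> K"
    and bd: "chamber_boundary U = f ` (convex hull {a, b, c'} \<union> convex hull {a, b, d} \<union>
                                  convex hull {a, c', d} \<union> convex hull {b, c', d})"
    using tet unfolding tetrahedral_chamber_def by blast
  let ?H = "{convex hull {a, b, c'}, convex hull {a, b, d}, convex hull {a, c', d}, convex hull {b, c', d}}"
  have HK: "?H \<subseteq> K" using hA hB hC hD by blast
  have sub: "S \<subseteq> \<Union>?H" if S: "S \<in> K" "face_on_boundary f S U" for S
  proof
    fix x assume x: "x \<in> S"
    have "f x \<in> f ` (\<Union>?H)" using S(2) x bd unfolding face_on_boundary_def by auto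
    then obtain y where y: "y \<in> \<Union>?H" "f x = f y" by blast
    have "x \<in> \<Union>K" using x S(1) by blast
    moreover have "y \<in> \<Union>K" using y(1) HK by blast
    ultimately have "x = y" using inj y(2) unfolding inj_on_def by blast
    then show "x \<in> \<Union>?H" using y(1) by simp
  qed
  have TK: "T \<in> K" "2 simplex T" "T' \<in> K" "2 simplex T'" using T T' by (auto simp: cfaces_def)
  have "T \<in> ?H" using tri_in_list[OF sc dim TK(1,2) HK sub[OF TK(1)]] h by blast
  then have TH: "T = convex hull {a,b,c'} \<or> T = convex hull {a,b,d} \<or> T = convex hull {a,c',d} \<or> T = convex hull {b,c',d}"
    by blast
  have "T' \<in> ?H" using tri_in_list[OF sc dim TK(3,4) HK sub[OF TK(3)]] h by blast
  then have TH': "T' = convex hull {a,b,c'} \<or> T' = convex hull {a,b,d} \<or> T' = convex hull {a,c',d} \<or> T' = convex hull {b,c',d}"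
    by blast
  have dist: "a\<noteq>b" "a\<noteq>c'" "a\<noteq>d" "b\<noteq>c'" "b\<noteq>d" "c'\<noteq>d" using card4_distinct[OF cd] by blast+
  show "fcol c T \<noteq> fcol c T'"
    using pair4[OF sc pc hA hB hC hD dist TH TH' _ TK(2) TK(4)] h by blast
qed




definition ee :: "5 \<Rightarrow> real^5" where "ee i = axis i 1"
definition Dl :: "(real^5) set" where "Dl = {x. (\<forall>i. 0 \<le> x$i) \<and> sum (\<lambda>i. x$i) UNIV = 1}"
definition Kx :: "(real^5) set set" where "Kx = {convex hull (ee ` I) | I. card I \<le> 3}"

lemma ee_inj: "inj ee" by (auto simp: inj_def ee_def axis_eq_axis)

lemma ee_nth: "ee i $ k = (if k = i then 1 else 0)" by (simp add: ee_def axis_def)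

lemma sum_ee_nth: "(\<Sum>i\<in>I. a i *\<^sub>R ee i) $ k = (if k \<in> I then a k else 0)" if "finite I"
  using that by (simp add: ee_nth if_distrib[of "\<lambda>t. _ * t"] sum.delta cong: if_cong)

lemma indep_ee: "\<not> affine_dependent (ee ` I)"
proof -
  have "ee ` I \<subseteq> Basis" by (auto simp: ee_def Basis_vec_def)
  then have "independent (ee ` I)" using independent_Basis independent_mono by blast
  then show ?thesis using affine_dependent_imp_dependent by blast
qed

lemma hull_ee: "convex hull (ee ` I) = {x \<in> Dl. \<forall>i. i \<notin> I \<longrightarrow> x$i = 0}"
proof -
  have fin: "finite (ee ` I)" "finite I" by auto
  have inj: "inj_on ee I" using ee_inj by (auto simp: inj_on_def inj_def)
  show ?thesis
  proof (rule set_eqI, rule iffI)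
    fix y assume "y \<in> convex hull (ee ` I)"
    then obtain u where u: "\<forall>x\<in>ee ` I. 0 \<le> u x" "sum u (ee ` I) = 1" "(\<Sum>x\<in>ee ` I. u x *\<^sub>R x) = y"
      unfolding convex_hull_finite[OF fin(1)] by blast
    have y: "y = (\<Sum>i\<in>I. u (ee i) *\<^sub>R ee i)" using u(3) sum.reindex[OF inj, of "\<lambda>v. u v *\<^sub>R v"] by (simp add: comp_def)
    have yk: "y $ k = (if k \<in> I then u (ee k) else 0)" for k using y sum_ee_nth[OF fin(2)] by simp
    have s1: "sum (\<lambda>i. u (ee i)) I = 1" using u(2) sum.reindex[OF inj, of u] by (simp add: comp_def)
    have "sum (\<lambda>k. y$k) UNIV = sum (\<lambda>i. u (ee i)) I"
      by (simp add: yk sum.If_cases)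
    then show "y \<in> {x \<in> Dl. \<forall>i. i \<notin> I \<longrightarrow> x$i = 0}"
      using u(1) s1 yk by (auto simp: Dl_def)
  next
    fix x assume x: "x \<in> {x \<in> Dl. \<forall>i. i \<notin> I \<longrightarrow> x$i = 0}"
    define u where "u v = inner v x" for v
    have ue: "u (ee i) = x $ i" for i by (simp add: u_def ee_def inner_axis')
    have "sum (\<lambda>k. x$k) UNIV = sum (\<lambda>k. x$k) I"
      using x by (intro sum.mono_neutral_right) auto
    then have "sum u (ee ` I) = 1" using x sum.reindex[OF inj, of u] by (simp add: comp_def ue Dl_def)
    moreover have "(\<Sum>v\<in>ee ` I. u v *\<^sub>R v) = x"
    proof -
      have "(\<Sum>v\<in>ee ` I. u v *\<^sub>R v) = (\<Sum>i\<in>I. x$i *\<^sub>R ee i)"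
        using sum.reindex[OF inj, of "\<lambda>v. u v *\<^sub>R v"] by (simp add: comp_def ue)
      also have "\<dots> = x" using x by (simp add: vec_eq_iff sum_ee_nth[OF fin(2)] del: sum_component)
      finally show ?thesis .
    qed
    moreover have "\<forall>v\<in>ee ` I. 0 \<le> u v" using x by (auto simp: ue Dl_def)
    ultimately show "x \<in> convex hull (ee ` I)"
      unfolding convex_hull_finite[OF fin(1)] by blast
  qed
qed

lemma card_ee: "card (ee ` I) = card I"
  using ee_inj by (simp add: card_image inj_on_def inj_def)

lemma Kx_simplex: "S \<in> Kx \<Longrightarrow> \<exists>n. n \<le> 2 \<and> n simplex S"
proof -
  assume "S \<in> Kx"
  then obtain I where I: "S = convex hull (ee ` I)" "card I \<le> 3" by (auto simp: Kx_def)
  have "(int (card I) - 1) simplex S"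
    using I indep_ee[of I] card_ee[of I] by (intro simplex_convex_hull[THEN subst[of _ _ "\<lambda>t. _ simplex t", OF I(1)[symmetric]]]) simp
  then show ?thesis using I by (intro exI[of _ "int (card I) - 1"]) auto
qed

lemma simplicial_Kx: "simplicial_2_complex Kx"
  unfolding simplicial_2_complex_def simplicial_complex_def
proof (intro conjI ballI allI impI)
  have "Kx = (\<lambda>I. convex hull (ee ` I)) ` {I. card I \<le> 3}" by (auto simp: Kx_def)
  then show "finite Kx" by (metis finite finite_imageI)
next
  fix S assume "S \<in> Kx" then show "\<exists>n. n simplex S" using Kx_simplex by blast
next
  fix S assume "S \<in> Kx" then show "\<exists>n. n \<le> 2 \<and> n simplex S" using Kx_simplex by blast
next
  fix F S assume a: "S \<in> Kx \<and> F face_of S"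
  then obtain I where I: "S = convex hull (ee ` I)" "card I \<le> 3" by (auto simp: Kx_def)
  then obtain c where c: "c \<subseteq> ee ` I" "F = convex hull c"
    using a face_of_convex_hull_affine_independent[OF indep_ee[of I]] by blast
  then obtain J where J: "J \<subseteq> I" "c = ee ` J" by (auto simp: subset_image_iff)
  have "card J \<le> 3" using J I card_mono[of I J] by simp
  then show "F \<in> Kx" using c J by (auto simp: Kx_def)
next
  fix S S' assume a: "S \<in> Kx \<and> S' \<in> Kx"
  then obtain I J where I: "S = convex hull (ee ` I)" "S' = convex hull (ee ` J)" by (auto simp: Kx_def)
  have "S \<inter> S' = convex hull (ee ` I \<inter> ee ` J)"
    using I convex_hull_Int[of "ee ` I" "ee ` J"] indep_ee[of "I \<union> J"] by (simp add: image_Un)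
  moreover have "ee ` I \<inter> ee ` J \<subseteq> ee ` I" by blast
  ultimately show "(S \<inter> S') face_of S"
    using I face_of_convex_hull_affine_independent[OF indep_ee[of I]] by blast
qed




definition S0 :: "(real^5) set" where "S0 = {x. sum (\<lambda>i. x$i) UNIV = 0}"
definition c0 :: "real^5" where "c0 = (\<chi> i. 1/5)"
definition Dz :: "(real^5) set" where "Dz = {x \<in> Dl. \<exists>i. x$i = 0}"

lemma card5: "CARD(5) = 5" by simp

lemma sum_c0: "sum (\<lambda>i. c0$i) UNIV = 1" by (simp add: c0_def)

lemma Dl_S0: "x \<in> Dl \<Longrightarrow> x - c0 \<in> S0"
  using sum_c0 by (simp add: Dl_def S0_def sum_subtractf)

locale emb =
  fixes F :: "real^5 \<Rightarrow> real^4" and G :: "real^4 \<Rightarrow> real^5"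
  assumes linF: "linear F" and linG: "linear G"
    and GF: "\<And>x. x \<in> S0 \<Longrightarrow> G (F x) = x" and FG: "\<And>y. F (G y) = y" and GS: "\<And>y. G y \<in> S0"
begin

definition hh where "hh x = F (x - c0)"
definition ff where "ff x = hh x /\<^sub>R norm (hh x)"
definition mn where "mn y = Min (range (\<lambda>i. G y $ i))"
definition psi where "psi y = c0 + (-1 / (5 * mn y)) *\<^sub>R G y"

lemma G_scale: "G (a *\<^sub>R y) = a *\<^sub>R G y" using linG by (simp add: linear_scale)
lemma F_scale: "F (a *\<^sub>R y) = a *\<^sub>R F y" using linF by (simp add: linear_scale)

lemma mn_le: "mn y \<le> G y $ i" unfolding mn_def by (intro Min_le) auto
lemma mn_in: "\<exists>i. G y $ i = mn y"
proof -
  have "mn y \<in> range (\<lambda>i. G y $ i)" unfolding mn_def by (intro Min_in) auto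
  then show ?thesis by auto
qed

lemma fwd:
  assumes x: "x \<in> Dz"
  shows "hh x \<noteq> 0" "ff x \<in> S3" "G (ff x) = (1 / norm (hh x)) *\<^sub>R (x - c0)" "psi (ff x) = x"
proof -
  have xD: "x \<in> Dl" and z: "\<exists>i. x$i = 0" using x by (auto simp: Dz_def)
  have S: "x - c0 \<in> S0" using Dl_S0 xD by blast
  have Ghh: "G (hh x) = x - c0" unfolding hh_def using GF S by blast
  show nz: "hh x \<noteq> 0"
  proof
    assume "hh x = 0"
    then have "x - c0 = 0" using Ghh linG linear_0 by metis
    moreover obtain i where "x$i = 0" using z by blast
    then have "(x - c0)$i = -1/5" by (simp add: c0_def)
    ultimately show False by simp
  qed
  then show "ff x \<in> S3" by (simp add: ff_def)
  define r where "r = 1 / norm (hh x)"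
  have r: "r > 0" using nz by (simp add: r_def)
  show Gf: "G (ff x) = (1 / norm (hh x)) *\<^sub>R (x - c0)"
    unfolding ff_def using G_scale Ghh by (simp add: divide_inverse_commute)
  have Gfi: "G (ff x) $ i = r * (x$i - 1/5)" for i using Gf by (simp add: r_def c0_def)
  have "mn (ff x) = r * (0 - 1/5)"
    unfolding mn_def
  proof (rule Min_eqI)
    fix t assume "t \<in> range (\<lambda>i. G (ff x) $ i)"
    then obtain i where ti: "t = r * (x$i - 1/5)" by (auto simp: Gfi)
    have "0 \<le> r * x$i" using xD r by (simp add: Dl_def)
    then show "r * (0 - 1/5) \<le> t" unfolding ti by (simp add: algebra_simps)
  next
    obtain i where "x$i = 0" using z by blast
    then have "G (ff x) $ i = r * (0 - 1/5)" by (simp add: Gfi)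
    then show "r * (0 - 1/5) \<in> range (\<lambda>i. G (ff x) $ i)" by (metis rangeI)
  qed simp
  then show "psi (ff x) = x"
    using r by (simp add: psi_def vec_eq_iff Gfi c0_def field_simps)
qed

lemma bwd:
  assumes y: "y \<in> S3"
  shows "mn y < 0" "psi y \<in> Dz" "ff (psi y) = y"
    "\<And>k. psi y $ k = (G y $ k - mn y) / (- 5 * mn y)"
proof -
  have ny: "norm y = 1" using y by simp
  have sG: "sum (\<lambda>i. G y $ i) UNIV = 0" using GS[of y] by (simp add: S0_def)
  have Gnz: "G y \<noteq> 0" using FG[of y] ny linF linear_0 by fastforce
  show m: "mn y < 0"
  proof (rule ccontr)
    assume "\<not> mn y < 0"
    then have ge: "\<forall>i. 0 \<le> G y $ i" using mn_le by (metis not_less order_trans)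
    then have "\<forall>i\<in>UNIV. G y $ i = 0" using sG sum_nonneg_eq_0_iff[of UNIV "\<lambda>i. G y $ i"] by simp
    then show False using Gnz by (simp add: vec_eq_iff)
  qed
  show pk: "psi y $ k = (G y $ k - mn y) / (- 5 * mn y)" for k
    using m by (simp add: psi_def c0_def field_simps)
  have "psi y \<in> Dl"
  proof -
    have "0 \<le> psi y $ k" for k
    proof -
      have "(G y $ k - mn y) / (5 * mn y) \<le> 0" using m mn_le[of y k] by (intro divide_nonneg_neg) auto
      then show ?thesis using pk[of k] by simp
    qed
    moreover have "sum (\<lambda>k. psi y $ k) UNIV = 1"
    proof -
      have "sum (\<lambda>k. psi y $ k) UNIV = sum (\<lambda>k. (G y $ k - mn y) / (- 5 * mn y)) UNIV" by (simp only: pk)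
      also have "\<dots> = (sum (\<lambda>k. G y $ k - mn y) UNIV) / (- 5 * mn y)" by (rule sum_divide_distrib[symmetric])
      also have "sum (\<lambda>k. G y $ k - mn y) UNIV = sum (\<lambda>k. G y$k) UNIV - 5 * mn y" by (simp add: sum_subtractf)
      finally have "sum (\<lambda>k. psi y $ k) UNIV = (sum (\<lambda>k. G y$k) UNIV - 5 * mn y) / (- 5 * mn y)" .
      then show ?thesis using sG m by simp
    qed
    ultimately show ?thesis by (simp add: Dl_def)
  qed
  moreover have "\<exists>i. psi y $ i = 0" using mn_in[of y] pk by auto
  ultimately show "psi y \<in> Dz" by (simp add: Dz_def)
  define t where "t = -1 / (5 * mn y)"
  have t: "t > 0" using m by (simp add: t_def divide_neg_neg)
  have "psi y - c0 = t *\<^sub>R G y" by (simp add: psi_def t_def)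
  then have "hh (psi y) = t *\<^sub>R y" by (simp add: hh_def F_scale FG)
  then show "ff (psi y) = y" using t ny by (simp add: ff_def)
qed

lemma image_ff: "P \<subseteq> Dz \<Longrightarrow> ff ` P = {y \<in> S3. psi y \<in> P}"
proof (rule set_eqI, rule iffI)
  fix y assume "P \<subseteq> Dz" "y \<in> ff ` P"
  then show "y \<in> {y \<in> S3. psi y \<in> P}" using fwd by force
next
  fix y assume "P \<subseteq> Dz" "y \<in> {y \<in> S3. psi y \<in> P}"
  then show "y \<in> ff ` P" using bwd(3) by (metis (no_types, lifting) image_eqI mem_Collect_eq)
qed

lemma inj_ff: "inj_on ff Dz"
  by (metis fwd(4) inj_onI)

lemma psi_zero: "y \<in> S3 \<Longrightarrow> psi y $ k = 0 \<longleftrightarrow> (\<forall>i. G y $ k \<le> G y $ i)"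
proof -
  assume y: "y \<in> S3"
  have "psi y $ k = 0 \<longleftrightarrow> G y $ k = mn y" using bwd(4)[OF y, of k] bwd(1)[OF y] by simp
  also have "\<dots> \<longleftrightarrow> (\<forall>i. G y $ k \<le> G y $ i)"
    using mn_le[of y] mn_in[of y] by (metis order_antisym)
  finally show ?thesis .
qed

lemma cont_hh: "continuous_on A hh"
proof -
  have "bounded_linear F" using linF by (simp add: linear_conv_bounded_linear)
  then have "continuous_on UNIV F" by (simp add: linear_continuous_on)
  then have c2: "continuous_on ((\<lambda>x. x - c0) ` A) F" using continuous_on_subset by blast
  have c1: "continuous_on A (\<lambda>x. x - c0)" by (intro continuous_intros)
  have "continuous_on A (F \<circ> (\<lambda>x. x - c0))" using continuous_on_compose[OF c1 c2] .
  moreover have "hh = F \<circ> (\<lambda>x. x - c0)" by (simp add: hh_def[abs_def] comp_def)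
  ultimately show ?thesis by simp
qed

lemma cont_ff: "(\<And>x. x \<in> A \<Longrightarrow> hh x \<noteq> 0) \<Longrightarrow> continuous_on A ff"
  unfolding ff_def using cont_hh by (intro continuous_intros) auto

lemma cont_ff_Dz: "continuous_on Dz ff" using cont_ff fwd(1) by blast

end



lemma ex_other: "\<exists>k::5. k \<noteq> j"
  by (cases "j = 0") (rule exI[of _ 1], simp, rule exI[of _ 0], simp)

lemma card_compl: "card (- A :: 5 set) = 5 - card A"
proof -
  have "- A = UNIV - A" by auto
  then show ?thesis by (simp add: card_Diff_subset)
qed

lemma UKx: "\<Union>Kx = {x \<in> Dl. \<exists>a b. a \<noteq> b \<and> x$a = 0 \<and> x$b = 0}"
proof (rule set_eqI, rule iffI)
  fix x assume "x \<in> \<Union>Kx"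
  then obtain I where I: "card I \<le> 3" "x \<in> convex hull (ee ` I)" by (auto simp: Kx_def)
  then have x: "x \<in> Dl" "\<And>i. i \<notin> I \<Longrightarrow> x$i = 0" by (auto simp: hull_ee)
  have c: "card (- I) \<ge> 2" using I(1) card_compl[of I] by simp
  then have "- I \<noteq> {}" by (metis card.empty not_numeral_le_zero)
  then obtain a where a: "a \<in> - I" by blast
  have "card (- I - {a}) \<ge> 1" using c a by simp
  then have "- I - {a} \<noteq> {}" by (metis card.empty not_one_le_zero)
  then obtain b where b: "b \<in> - I - {a}" by blast
  show "x \<in> {x \<in> Dl. \<exists>a b. a \<noteq> b \<and> x$a = 0 \<and> x$b = 0}"
    using a b x by blast
next
  fix x assume "x \<in> {x \<in> Dl. \<exists>a b. a \<noteq> b \<and> x$a = 0 \<and> x$b = 0}"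
  then obtain a b where x: "x \<in> Dl" "a \<noteq> b" "x$a = 0" "x$b = 0" by blast
  have "card (- {a,b}) = 3" using card_compl[of "{a,b}"] x(2) by simp
  moreover have "x \<in> convex hull (ee ` (- {a,b}))" using x by (auto simp: hull_ee)
  ultimately have "convex hull (ee ` (- {a,b})) \<in> Kx" "x \<in> convex hull (ee ` (- {a,b}))"
    unfolding Kx_def by auto
  then show "x \<in> \<Union>Kx" by blast
qed

lemma UKx_Dz: "\<Union>Kx \<subseteq> Dz" unfolding UKx Dz_def by blast

context emb begin

definition Cj where "Cj j = {z. \<forall>k. k \<noteq> j \<longrightarrow> G z $ j < G z $ k}"
definition Uj where "Uj j = S3 \<inter> Cj j"
definition Dj where "Dj j = {y \<in> S3. \<forall>k. G y $ j \<le> G y $ k}"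

lemma image_UKx: "ff ` \<Union>Kx = {y \<in> S3. \<exists>a b. a \<noteq> b \<and> psi y $ a = 0 \<and> psi y $ b = 0}"
proof -
  have "ff ` \<Union>Kx = {y \<in> S3. psi y \<in> \<Union>Kx}" using image_ff UKx_Dz by blast
  moreover have "psi y \<in> Dl" if "y \<in> S3" for y using bwd(2)[OF that] by (simp add: Dz_def)
  ultimately show ?thesis unfolding UKx by blast
qed

lemma compl_eq: "S3 - ff ` \<Union>Kx = (\<Union>j. Uj j)"
proof (rule set_eqI, rule iffI)
  fix y assume y: "y \<in> S3 - ff ` \<Union>Kx"
  then have yS: "y \<in> S3" by blast
  have "y \<notin> ff ` \<Union>Kx" using y by simp
  then have nz: "\<not> (\<exists>a b. a \<noteq> b \<and> psi y $ a = 0 \<and> psi y $ b = 0)" unfolding image_UKx using yS by simp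
  obtain j where j: "G y $ j = mn y" using mn_in by blast
  have jmin: "\<forall>i. G y $ j \<le> G y $ i" using j mn_le by metis
  have "G y $ j < G y $ k" if "k \<noteq> j" for k
  proof (rule ccontr)
    assume "\<not> G y $ j < G y $ k"
    then have "\<forall>i. G y $ k \<le> G y $ i" using jmin by (metis not_less order_trans)
    then have "psi y $ k = 0" "psi y $ j = 0" using psi_zero[OF yS] jmin by blast+
    then show False using nz that by blast
  qed
  then show "y \<in> (\<Union>j. Uj j)" using yS by (auto simp: Uj_def Cj_def)
next
  fix y assume "y \<in> (\<Union>j. Uj j)"
  then obtain j where yS: "y \<in> S3" and lt: "\<And>k. k \<noteq> j \<Longrightarrow> G y $ j < G y $ k" by (auto simp: Uj_def Cj_def)
  have "a = j" if "psi y $ a = 0" for a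
  proof (rule ccontr)
    assume "a \<noteq> j"
    then have "G y $ j < G y $ a" using lt by blast
    moreover have "G y $ a \<le> G y $ j" using that psi_zero[OF yS] by blast
    ultimately show False by simp
  qed
  then have "\<not> (\<exists>a b. a \<noteq> b \<and> psi y $ a = 0 \<and> psi y $ b = 0)" by blast
  then have "y \<notin> ff ` \<Union>Kx" unfolding image_UKx by simp
  then show "y \<in> S3 - ff ` \<Union>Kx" using yS by simp
qed

lemma contG: "continuous_on UNIV (\<lambda>z. G z $ i)"
proof -
  have "bounded_linear G" using linG by (simp add: linear_conv_bounded_linear)
  then have "bounded_linear (\<lambda>z. G z $ i)" using bounded_linear_vec_nth[of i] bounded_linear_compose by blast
  then show ?thesis by (simp add: linear_continuous_on)
qed

lemma open_Cj: "open (Cj j)"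
proof -
  have "Cj j = (\<Inter>k\<in>-{j}. {z. G z $ j < G z $ k})" by (auto simp: Cj_def)
  moreover have "open {z. G z $ j < G z $ k}" for k using open_Collect_less[OF contG contG] .
  ultimately show ?thesis by (simp add: open_INT)
qed

lemma Cj_nz: "z \<in> Cj j \<Longrightarrow> z \<noteq> 0"
proof
  assume "z \<in> Cj j" "z = 0"
  moreover obtain k where "k \<noteq> j" using ex_other by blast
  moreover have "G 0 = 0" using linG linear_0 by blast
  ultimately show False by (auto simp: Cj_def)
qed

lemma Cj_disj: "j \<noteq> k \<Longrightarrow> Cj j \<inter> Cj k = {}"
  by (auto simp: Cj_def) (metis less_asym)

lemma G_add: "G (a + b) = G a + G b" using linG by (simp add: linear_add)

lemma convex_Cj: "convex (Cj j)"
proof (rule convexI)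
  fix x y and u v :: real assume xy: "x \<in> Cj j" "y \<in> Cj j" and uv0: "0 \<le> u" "0 \<le> v" "u + v = 1"
  have uv: "0 \<le> u \<and> 0 \<le> v \<and> u + v = 1" using uv0 by simp
  have key: "u * a + v * c < u * b + v * d" if "a < b" "c < d" for a b c d :: real
  proof (cases "u = 0")
    case True then show ?thesis using uv that by simp
  next
    case False
    then have "u * a < u * b" using uv that by (simp add: mult_strict_left_mono)
    moreover have "v * c \<le> v * d" using uv that by (simp add: mult_left_mono)
    ultimately show ?thesis by simp
  qed
  show "u *\<^sub>R x + v *\<^sub>R y \<in> Cj j"
    unfolding Cj_def using xy key by (auto simp: Cj_def G_add G_scale)
qed

lemma Uj_image: "Uj j = (\<lambda>z. z /\<^sub>R norm z) ` Cj j"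
proof (rule set_eqI, rule iffI)
  fix y assume "y \<in> Uj j"
  then have "y \<in> Cj j" "norm y = 1" by (auto simp: Uj_def)
  then show "y \<in> (\<lambda>z. z /\<^sub>R norm z) ` Cj j" using image_eqI[of y "\<lambda>z. z /\<^sub>R norm z" y "Cj j"] by simp
next
  fix y assume "y \<in> (\<lambda>z. z /\<^sub>R norm z) ` Cj j"
  then obtain z where z: "z \<in> Cj j" "y = z /\<^sub>R norm z" by blast
  have nz: "norm z > 0" using Cj_nz[OF z(1)] by simp
  have "G y = (1 / norm z) *\<^sub>R G z" using z(2) G_scale by (simp add: divide_inverse_commute)
  then have "y \<in> Cj j" using z(1) nz by (simp add: Cj_def divide_strict_right_mono)
  moreover have "norm y = 1" using z(2) nz by simp
  ultimately show "y \<in> Uj j" by (simp add: Uj_def)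
qed

lemma connected_Uj: "connected (Uj j)"
proof -
  have "continuous_on (Cj j) (\<lambda>z. z /\<^sub>R norm z)"
    using Cj_nz by (intro continuous_intros) auto
  then show ?thesis unfolding Uj_image
    using connected_continuous_image convex_connected convex_Cj by blast
qed

lemma Uj_nonempty: "Uj j \<noteq> {}"
proof -
  define x :: "real^5" where "x = (\<chi> i. if i = j then 0 else 1/4)"
  have s: "sum (\<lambda>i. x$i) UNIV = 1"
  proof -
    have "sum (\<lambda>i. x$i) UNIV = sum (\<lambda>i. 1/4) (UNIV - {j})"
      by (simp add: x_def sum.If_cases Compl_eq_Diff_UNIV)
    also have "\<dots> = 1" by (simp add: card_Diff_subset)
    finally show ?thesis .
  qed
  have xD: "x \<in> Dz" using s by (auto simp: Dz_def Dl_def x_def)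
  define r where "r = 1 / norm (hh x)"
  have r: "r > 0" using fwd(1)[OF xD] by (simp add: r_def)
  have "G (ff x) $ k = r * (x$k - 1/5)" for k using fwd(3)[OF xD] by (simp add: r_def c0_def)
  then have "ff x \<in> Cj j" using r by (simp add: Cj_def x_def)
  then show ?thesis using fwd(2)[OF xD] by (auto simp: Uj_def)
qed

lemma comp_Uj:
  assumes y: "y \<in> Uj j"
  shows "connected_component_set (S3 - ff ` \<Union>Kx) y = Uj j"
proof
  have UX: "Uj j \<subseteq> S3 - ff ` \<Union>Kx" unfolding compl_eq by blast
  show "Uj j \<subseteq> connected_component_set (S3 - ff ` \<Union>Kx) y"
    using y connected_Uj UX by (rule connected_component_maximal)
next
  let ?X = "S3 - ff ` \<Union>Kx"
  let ?C = "connected_component_set ?X y"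
  have UX: "Uj j \<subseteq> ?X" unfolding compl_eq by blast
  have cC: "connected ?C" by (rule connected_connected_component)
  have CX: "?C \<subseteq> ?X" by (rule connected_component_subset)
  have "y \<in> ?X" using UX y by blast
  then have yC: "y \<in> ?C" by (simp add: connected_component_refl_eq)
  have XC: "?X \<subseteq> (\<Union>i. Cj i)" unfolding compl_eq Uj_def by blast
  show "?C \<subseteq> Uj j"
  proof
    fix z assume z: "z \<in> ?C"
    show "z \<in> Uj j"
    proof (rule ccontr)
      assume nz: "z \<notin> Uj j"
      have "z \<in> ?X" using z CX by blast
      then have zX: "z \<in> (\<Union>j. Uj j)" unfolding compl_eq .
      then obtain k where k: "z \<in> Uj k" by blast
      have kj: "k \<noteq> j" using k nz by blast
      let ?B = "\<Union>i\<in>-{j}. Cj i"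
      have oB: "open ?B" using open_Cj by blast
      have "(\<Union>i. Cj i) \<subseteq> Cj j \<union> ?B"
      proof
        fix w assume "w \<in> (\<Union>i. Cj i)"
        then obtain i where "w \<in> Cj i" by blast
        then show "w \<in> Cj j \<union> ?B" by (cases "i = j") auto
      qed
      moreover have "?C \<subseteq> (\<Union>i. Cj i)" using CX XC by (rule subset_trans)
      ultimately have "?C \<subseteq> Cj j \<union> ?B" by (rule subset_trans[rotated])
      moreover have "Cj j \<inter> ?B = {}"
      proof -
        have "Cj j \<inter> Cj i = {}" if "i \<in> - {j}" for i using Cj_disj[of j i] that by auto
        then show ?thesis by blast
      qed
      then have "Cj j \<inter> ?B \<inter> ?C = {}" by blast
      moreover have "y \<in> Cj j" using y by (simp add: Uj_def)
      then have "Cj j \<inter> ?C \<noteq> {}" using yC by blast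
      moreover have "z \<in> Cj k" using k by (simp add: Uj_def)
      then have "?B \<inter> ?C \<noteq> {}" using z kj by blast
      ultimately show False using connectedD[OF cC open_Cj oB] by blast
    qed
  qed
qed

lemma chambers_eq: "chambers Kx ff = range Uj"
proof (rule set_eqI, rule iffI)
  fix U assume "U \<in> chambers Kx ff"
  then obtain y where y: "y \<in> S3 - ff ` \<Union>Kx" "U = connected_component_set (S3 - ff ` \<Union>Kx) y"
    by (auto simp: chambers_def components_iff)
  then have "y \<in> (\<Union>j. Uj j)" unfolding compl_eq by simp
  then obtain j where "y \<in> Uj j" by blast
  then show "U \<in> range Uj" using comp_Uj y(2) by auto
next
  fix U assume "U \<in> range Uj"
  then obtain j where j: "U = Uj j" by blast
  obtain y where y: "y \<in> Uj j" using Uj_nonempty by blast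
  have "y \<in> (\<Union>j. Uj j)" using y by blast
  then have "y \<in> S3 - ff ` \<Union>Kx" unfolding compl_eq .
  then show "U \<in> chambers Kx ff" using comp_Uj[OF y] j by (auto simp: chambers_def components_iff)
qed

end



lemma card4:
  assumes "card A = 4"
  shows "\<exists>a b c d. A = {a,b,c,d} \<and> a\<noteq>b \<and> a\<noteq>c \<and> a\<noteq>d \<and> b\<noteq>c \<and> b\<noteq>d \<and> c\<noteq>d"
proof -
  have c3: "card A = Suc 3" using assms by simp
  obtain a B where 1: "A = insert a B" "a \<notin> B" "card B = 3" using card_eq_SucD[OF c3] by blast
  have c2: "card B = Suc 2" using 1(3) by simp
  obtain b C where 2: "B = insert b C" "b \<notin> C" "card C = 2" using card_eq_SucD[OF c2] by blast
  have c1: "card C = Suc 1" using 2(3) by simp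
  obtain c D where 3: "C = insert c D" "c \<notin> D" "card D = 1" using card_eq_SucD[OF c1] by blast
  have c0: "card D = Suc 0" using 3(3) by simp
  obtain d E where 4: "D = insert d E" "E = {}" using card_eq_SucD[OF c0] by blast
  have "A = {a,b,c,d}" using 1 2 3 4 by simp
  moreover have "a\<noteq>b \<and> a\<noteq>c \<and> a\<noteq>d \<and> b\<noteq>c \<and> b\<noteq>d \<and> c\<noteq>d" using 1 2 3 4 by auto
  ultimately show ?thesis by blast
qed

lemma hull_facet: "convex hull (ee ` (- {j})) = {x \<in> Dl. x$j = 0}"
  unfolding hull_ee by auto

lemma sum_ee: "sum (\<lambda>k. ee j $ k) UNIV = 1" by (simp add: ee_nth)

context emb begin

lemma Dj_psi: "Dj j = {y \<in> S3. psi y $ j = 0}"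
  using psi_zero unfolding Dj_def by blast

lemma closed_Dj: "closed (Dj j)"
proof -
  have "Dj j = S3 \<inter> (\<Inter>k. {y. G y $ j \<le> G y $ k})" by (auto simp: Dj_def)
  moreover have "closed {y. G y $ j \<le> G y $ k}" for k using closed_Collect_le[OF contG contG] .
  ultimately show ?thesis by (simp add: closed_INT closed_Int)
qed

lemma Uj_Dj: "Uj j \<subseteq> Dj j"
proof
  fix y assume "y \<in> Uj j"
  then have yS: "y \<in> S3" and lt: "\<And>k. k \<noteq> j \<Longrightarrow> G y $ j < G y $ k" by (auto simp: Uj_def Cj_def)
  have "G y $ j \<le> G y $ k" for k
  proof (cases "k = j")
    case False then show ?thesis using lt[OF False] by simp
  qed simp
  then show "y \<in> Dj j" unfolding Dj_def using yS by blast
qed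

lemma closure_Uj: "closure (Uj j) = Dj j"
proof
  show "closure (Uj j) \<subseteq> Dj j" using Uj_Dj closed_Dj by (rule closure_minimal)
next
  show "Dj j \<subseteq> closure (Uj j)"
  proof
    fix y assume y: "y \<in> Dj j"
    have yS: "norm y = 1" and ymin: "\<And>k. G y $ j \<le> G y $ k" using y by (auto simp: Dj_def)
    define d where "d = F (c0 - ee j)"
    have "c0 - ee j \<in> S0" using sum_c0 sum_ee[of j] by (simp add: S0_def sum_subtractf)
    then have Gd: "G d = c0 - ee j" unfolding d_def using GF by blast
    define \<phi> where "\<phi> t = (y + t *\<^sub>R d) /\<^sub>R norm (y + t *\<^sub>R d)" for t :: real
    have inC: "y + t *\<^sub>R d \<in> Cj j" if "t > 0" for t
    proof -
      have e: "G (y + t *\<^sub>R d) $ k = G y $ k + t * (1/5 - (if k = j then 1 else 0))" for k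
        using Gd by (simp add: G_add G_scale c0_def ee_nth)
      have "G (y + t *\<^sub>R d) $ j < G (y + t *\<^sub>R d) $ k" if "k \<noteq> j" for k
      proof -
        have "G (y + t *\<^sub>R d) $ j = G y $ j + t * (1/5 - 1)" using e[of j] by simp
        moreover have "G (y + t *\<^sub>R d) $ k = G y $ k + t * (1/5)" using e[of k] that by simp
        ultimately show ?thesis using ymin[of k] \<open>t > 0\<close> by simp
      qed
      then show ?thesis by (simp add: Cj_def)
    qed
    have nz: "y + t *\<^sub>R d \<noteq> 0" if "t \<in> {0..1}" for t
    proof (cases "t = 0")
      case True then show ?thesis using yS by auto
    next
      case False
      then have "t > 0" using that by simp
      then show ?thesis using inC Cj_nz by blast
    qed
    have cont: "continuous_on (closure {0<..<1::real}) \<phi>"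
      unfolding \<phi>_def using nz by (auto intro!: continuous_intros)
    have "\<phi> ` {0<..<1} \<subseteq> Uj j"
    proof
      fix w assume "w \<in> \<phi> ` {0<..<1}"
      then obtain t where t: "t \<in> {0<..<1}" "w = \<phi> t" by blast
      have "y + t *\<^sub>R d \<in> Cj j" using inC t by simp
      then show "w \<in> Uj j" unfolding Uj_image t(2) \<phi>_def by blast
    qed
    then have "\<phi> ` {0<..<1} \<subseteq> closure (Uj j)" using closure_subset by blast
    then have "\<phi> ` closure {0<..<1} \<subseteq> closure (Uj j)"
      using image_closure_subset[OF cont closed_closure] by blast
    moreover have "(0::real) \<in> closure {0<..<1}" by simp
    moreover have "\<phi> 0 = y" using yS by (simp add: \<phi>_def)
    ultimately show "y \<in> closure (Uj j)" by (metis image_eqI subsetD)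
  qed
qed

definition Wj where "Wj j = {x \<in> Dl. x$j = 0 \<and> (\<exists>k. k \<noteq> j \<and> x$k = 0)}"

lemma boundary_Uj: "chamber_boundary (Uj j) = ff ` Wj j"
proof -
  have "Wj j \<subseteq> Dz" by (auto simp: Wj_def Dz_def)
  then have im: "ff ` Wj j = {y \<in> S3. psi y \<in> Wj j}" by (rule image_ff)
  have psiD: "psi y \<in> Dl" if "y \<in> S3" for y using bwd(2)[OF that] by (simp add: Dz_def)
  have "chamber_boundary (Uj j) = Dj j - Uj j" by (simp add: chamber_boundary_def closure_Uj)
  also have "\<dots> = {y \<in> S3. psi y \<in> Wj j}"
  proof (rule set_eqI, rule iffI)
    fix y assume y: "y \<in> Dj j - Uj j"
    then have yS: "y \<in> S3" and ymin: "\<forall>k. G y $ j \<le> G y $ k" by (auto simp: Dj_def)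
    from y have "\<not> (\<forall>k. k \<noteq> j \<longrightarrow> G y $ j < G y $ k)" using yS by (auto simp: Uj_def Cj_def)
    then obtain k where k: "k \<noteq> j" "G y $ k \<le> G y $ j" by (auto simp: not_less)
    then have "\<forall>i. G y $ k \<le> G y $ i" using ymin by (metis order_trans)
    then have "psi y $ k = 0" "psi y $ j = 0" using psi_zero[OF yS] ymin by blast+
    then show "y \<in> {y \<in> S3. psi y \<in> Wj j}" using k yS psiD[OF yS] by (auto simp: Wj_def)
  next
    fix y assume y: "y \<in> {y \<in> S3. psi y \<in> Wj j}"
    then have yS: "y \<in> S3" and pj: "psi y $ j = 0" and pk: "\<exists>k. k \<noteq> j \<and> psi y $ k = 0"
      by (auto simp: Wj_def)
    obtain k where k: "k \<noteq> j" "psi y $ k = 0" using pk by blast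
    have "y \<in> Dj j" using yS pj Dj_psi by blast
    moreover have "G y $ k \<le> G y $ j" using psi_zero[OF yS] k by blast
    then have "y \<notin> Uj j" using k by (auto simp: Uj_def Cj_def not_less)
    ultimately show "y \<in> Dj j - Uj j" by blast
  qed
  finally show ?thesis using im by simp
qed

lemma closure_homeo: "closure (Uj j) homeomorphic cball (0::real^3) 1"
proof -
  let ?F = "convex hull (ee ` (- {j}))"
  have FD: "?F \<subseteq> Dz" unfolding hull_facet by (auto simp: Dz_def)
  have "ff ` ?F = {y \<in> S3. psi y \<in> ?F}" using image_ff[OF FD] .
  also have "\<dots> = Dj j"
    unfolding Dj_psi hull_facet using bwd(2) by (auto simp: Dz_def)
  finally have imF: "ff ` ?F = closure (Uj j)" using closure_Uj by simp
  have cF: "compact ?F" by (simp add: finite_imp_compact_convex_hull)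
  have "continuous_on ?F ff" using continuous_on_subset[OF cont_ff_Dz FD] .
  moreover have "inj_on ff ?F" using inj_on_subset[OF inj_ff FD] .
  ultimately obtain g where "homeomorphism ?F (closure (Uj j)) ff g"
    using homeomorphism_compact[OF cF _ imF] by blast
  then have h1: "?F homeomorphic closure (Uj j)" unfolding homeomorphic_def by blast
  have "card (ee ` (- {j})) = 4" using card_ee card_compl[of "{j}"] by simp
  then have "aff_dim ?F = 3"
    using aff_dim_affine_independent[OF indep_ee[of "- {j}"]] by (simp add: aff_dim_convex_hull)
  moreover have "aff_dim (cball (0::real^3) 1) = 3" by (simp add: aff_dim_cball)
  ultimately have h2: "?F homeomorphic cball (0::real^3) 1"
    using cF by (intro homeomorphic_convex_compact_sets) auto
  show ?thesis using h1 h2 homeomorphic_sym homeomorphic_trans by metis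
qed

lemma tetra: "tetrahedral_chamber Kx ff (Uj j)"
proof -
  have c4: "card (- {j}) = 4" using card_compl[of "{j}"] by simp
  obtain a b c d where abcd: "- {j} = {a,b,c,d}" "a\<noteq>b" "a\<noteq>c" "a\<noteq>d" "b\<noteq>c" "b\<noteq>d" "c\<noteq>d"
    using card4[OF c4] by metis
  have nj: "a \<noteq> j" "b \<noteq> j" "c \<noteq> j" "d \<noteq> j" using abcd(1) by auto
  have all: "i = j \<or> i = a \<or> i = b \<or> i = c \<or> i = d" for i using abcd(1) by auto
  have inK: "convex hull {ee p, ee q, ee r} \<in> Kx" for p q r
  proof -
    have "card {p,q,r} \<le> 3" by (simp add: card_insert_le_m1 card_insert_if)
    then show ?thesis unfolding Kx_def by (intro CollectI exI[of _ "{p,q,r}"]) simp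
  qed
  have tri: "convex hull {ee p, ee q, ee r} = {x \<in> Dl. \<forall>i. i \<notin> {p,q,r} \<longrightarrow> x$i = 0}" for p q r
    using hull_ee[of "{p,q,r}"] by simp
  have P: "(\<forall>i. i \<notin> {p,q,r} \<longrightarrow> x$i = 0) \<longleftrightarrow> (x$j = 0 \<and> x$s = 0)"
    if "s \<noteq> j" "s \<notin> {p,q,r}" "j \<notin> {p,q,r}" "\<And>i. i = j \<or> i = s \<or> i \<in> {p,q,r}" for p q r s x
  proof
    assume "\<forall>i. i \<notin> {p,q,r} \<longrightarrow> x$i = 0" then show "x$j = 0 \<and> x$s = 0" using that by blast
  next
    assume h: "x$j = 0 \<and> x$s = 0"
    show "\<forall>i. i \<notin> {p,q,r} \<longrightarrow> x$i = 0"
    proof (intro allI impI)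
      fix i assume "i \<notin> {p,q,r}" then have "i = j \<or> i = s" using that(4)[of i] by blast
      then show "x$i = 0" using h by blast
    qed
  qed
  have A1: "\<And>i. i = j \<or> i = d \<or> i \<in> {a,b,c}" using all by blast
  have Q1: "(\<forall>i. i \<notin> {a,b,c} \<longrightarrow> x$i = 0) \<longleftrightarrow> (x$j = 0 \<and> x$d = 0)" for x
    by (rule P) (use nj abcd A1 in auto)
  have P1: "convex hull {ee a, ee b, ee c} = {x \<in> Dl. x$j = 0 \<and> x$d = 0}"
    unfolding tri Q1 by (rule refl)
  have A2: "\<And>i. i = j \<or> i = c \<or> i \<in> {a,b,d}" using all by blast
  have Q2: "(\<forall>i. i \<notin> {a,b,d} \<longrightarrow> x$i = 0) \<longleftrightarrow> (x$j = 0 \<and> x$c = 0)" for x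
    by (rule P) (use nj abcd A2 in auto)
  have P2: "convex hull {ee a, ee b, ee d} = {x \<in> Dl. x$j = 0 \<and> x$c = 0}"
    unfolding tri Q2 by (rule refl)
  have A3: "\<And>i. i = j \<or> i = b \<or> i \<in> {a,c,d}" using all by blast
  have Q3: "(\<forall>i. i \<notin> {a,c,d} \<longrightarrow> x$i = 0) \<longleftrightarrow> (x$j = 0 \<and> x$b = 0)" for x
    by (rule P) (use nj abcd A3 in auto)
  have P3: "convex hull {ee a, ee c, ee d} = {x \<in> Dl. x$j = 0 \<and> x$b = 0}"
    unfolding tri Q3 by (rule refl)
  have A4: "\<And>i. i = j \<or> i = a \<or> i \<in> {b,c,d}" using all by blast
  have Q4: "(\<forall>i. i \<notin> {b,c,d} \<longrightarrow> x$i = 0) \<longleftrightarrow> (x$j = 0 \<and> x$a = 0)" for x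
    by (rule P) (use nj abcd A4 in auto)
  have P4: "convex hull {ee b, ee c, ee d} = {x \<in> Dl. x$j = 0 \<and> x$a = 0}"
    unfolding tri Q4 by (rule refl)
  have ex: "(\<exists>k. k \<noteq> j \<and> x$k = 0) \<longleftrightarrow> (x$a = 0 \<or> x$b = 0 \<or> x$c = 0 \<or> x$d = 0)" for x :: "real^5"
  proof
    assume "\<exists>k. k \<noteq> j \<and> x$k = 0"
    then obtain k where "k \<noteq> j" "x$k = 0" by blast
    then show "x$a = 0 \<or> x$b = 0 \<or> x$c = 0 \<or> x$d = 0" using all[of k] by blast
  next
    assume "x$a = 0 \<or> x$b = 0 \<or> x$c = 0 \<or> x$d = 0"
    then show "\<exists>k. k \<noteq> j \<and> x$k = 0" using nj by blast
  qed
  have U: "convex hull {ee a, ee b, ee c} \<union> convex hull {ee a, ee b, ee d} \<union>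
           convex hull {ee a, ee c, ee d} \<union> convex hull {ee b, ee c, ee d} = Wj j"
    unfolding P1 P2 P3 P4 Wj_def ex by blast
  have card: "card {ee a, ee b, ee c, ee d} = 4"
    using abcd by (simp add: inj_eq[OF ee_inj])
  show ?thesis unfolding tetrahedral_chamber_def
    using card inK boundary_Uj U closure_homeo by metis
qed

end



lemma cover4: fixes p q r s x :: nat
  assumes "p<4" "q<4" "r<4" "s<4" "p\<noteq>q" "p\<noteq>r" "p\<noteq>s" "q\<noteq>r" "q\<noteq>s" "r\<noteq>s" "x < 4"
  shows "x = p \<or> x = q \<or> x = r \<or> x = s"
proof -
  have "{p,q,r,s} \<subseteq> {0..<4}" using assms by auto
  moreover have "card {p,q,r,s} = card {0..<(4::nat)}" using assms by simp
  ultimately have e: "{p,q,r,s} = {0..<4}" by (intro card_seteq) auto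
  have "x \<in> {0..<4}" using assms(11) by simp
  then have "x \<in> {p,q,r,s}" unfolding e .
  then show ?thesis by simp
qed

lemma k5: fixes a b c d e f g h i j :: nat
  assumes "a<4" "b<4" "c<4" "d<4" "e<4" "f<4" "g<4" "h<4" "i<4" "j<4"
  and "a\<noteq>b" "a\<noteq>c" "a\<noteq>d" "b\<noteq>c" "b\<noteq>d" "c\<noteq>d"
  and "a\<noteq>e" "a\<noteq>f" "a\<noteq>g" "e\<noteq>f" "e\<noteq>g" "f\<noteq>g"
  and "b\<noteq>e" "b\<noteq>h" "b\<noteq>i" "e\<noteq>h" "e\<noteq>i" "h\<noteq>i"
  and "c\<noteq>f" "c\<noteq>h" "c\<noteq>j" "f\<noteq>h" "f\<noteq>j" "h\<noteq>j"
  and "d\<noteq>g" "d\<noteq>i" "d\<noteq>j" "g\<noteq>i" "g\<noteq>j" "i\<noteq>j"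
  shows False
proof -
  have "a = b \<or> a = e \<or> a = h \<or> a = i" using cover4[of b e h i a] assms by blast
  then have "a = h \<or> a = i" using assms by blast
  moreover have "a = d \<or> a = g \<or> a = i \<or> a = j" using cover4[of d g i j a] assms by blast
  moreover have "a = c \<or> a = f \<or> a = h \<or> a = j" using cover4[of c f h j a] assms by blast
  ultimately show False using assms by blast
qed

definition tri :: "5 \<Rightarrow> 5 \<Rightarrow> (real^5) set" where "tri p q = convex hull (ee ` (- {p,q}))"

lemma tri_sym: "tri p q = tri q p" by (simp add: tri_def insert_commute)

lemma card_tri: "p \<noteq> q \<Longrightarrow> card (- {p,q} :: 5 set) = 3"
  using card_compl[of "{p,q}"] by simp

lemma tri_cf: "p \<noteq> q \<Longrightarrow> tri p q \<in> cfaces Kx"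
proof -
  assume pq: "p \<noteq> q"
  have "tri p q \<in> Kx" using card_tri[OF pq] unfolding Kx_def tri_def by auto
  moreover have "2 simplex tri p q" unfolding tri_def
    using card_tri[OF pq] card_ee[of "- {p,q}"] indep_ee[of "- {p,q}"] by (intro simplex_convex_hull) simp
  ultimately show ?thesis by (simp add: cfaces_def)
qed

lemma tri_ne: "p \<noteq> q \<Longrightarrow> p \<noteq> r \<Longrightarrow> q \<noteq> r \<Longrightarrow> tri p q \<noteq> tri p r"
proof
  assume a: "p \<noteq> q" "p \<noteq> r" "q \<noteq> r" "tri p q = tri p r"
  have "ee r \<in> ee ` (- {p,q})" using a by auto
  then have "ee r \<in> tri p q" unfolding tri_def by (rule hull_inc)
  moreover have "ee r \<notin> tri p r" unfolding tri_def hull_ee by (simp add: ee_nth)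
  ultimately show False using a(4) by simp
qed

lemma Kx_vertex: "v \<in> cvertices Kx \<Longrightarrow> v \<in> range ee"
proof -
  assume "v \<in> cvertices Kx"
  then obtain I where I: "{v} = convex hull (ee ` I)" by (auto simp: cvertices_def Kx_def)
  have "ee ` I \<subseteq> convex hull (ee ` I)" by (rule hull_subset)
  then have "ee ` I \<subseteq> {v}" using I by simp
  moreover have "I \<noteq> {}" using I by auto
  ultimately show ?thesis by blast
qed

lemma vcol: "\<exists>c. proper_vertex_colouring Kx 5 c"
proof -
  obtain \<phi> :: "5 \<Rightarrow> nat" where \<phi>: "bij_betw \<phi> UNIV {0..<card (UNIV :: 5 set)}"
    using ex_bij_betw_finite_nat[of "UNIV :: 5 set"] by auto
  then have \<phi>5: "\<phi> i < 5" for i by (auto simp: bij_betw_def)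
  have \<phi>inj: "\<phi> i = \<phi> k \<Longrightarrow> i = k" for i k using \<phi> by (auto simp: bij_betw_def inj_def)
  define c where "c v = \<phi> (inv ee v)" for v
  have ce: "c (ee i) = \<phi> i" for i by (simp add: c_def inv_f_f[OF ee_inj])
  show ?thesis unfolding proper_vertex_colouring_def
  proof (intro exI[of _ c] conjI ballI impI)
    fix v assume "v \<in> cvertices Kx"
    then obtain i where "v = ee i" using Kx_vertex by blast
    then show "c v < 5" using ce \<phi>5 by simp
  next
    fix u v assume uv: "u \<in> cvertices Kx" "v \<in> cvertices Kx" "u \<noteq> v \<and> closed_segment u v \<in> cedges Kx"
    obtain i where i: "u = ee i" using Kx_vertex uv(1) by blast
    obtain k where k: "v = ee k" using Kx_vertex uv(2) by blast
    have "i \<noteq> k" using uv(3) i k by blast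
    then show "c u \<noteq> c v" using i k ce \<phi>inj by metis
  qed
qed

context emb begin

lemma triang: "triangulation_S3 Kx ff"
  unfolding triangulation_S3_def
proof (intro conjI ballI)
  show "simplicial_2_complex Kx" by (rule simplicial_Kx)
  show "continuous_on (\<Union>Kx) ff" using continuous_on_subset[OF cont_ff_Dz UKx_Dz] .
  show "inj_on ff (\<Union>Kx)" using inj_on_subset[OF inj_ff UKx_Dz] .
  show "ff ` \<Union>Kx \<subseteq> S3" using fwd(2) UKx_Dz by blast
  fix U assume "U \<in> chambers Kx ff"
  then obtain j where "U = Uj j" using chambers_eq by blast
  then show "tetrahedral_chamber Kx ff U" using tetra by simp
qed

lemma tri_bd: "p \<noteq> q \<Longrightarrow> face_on_boundary ff (tri p q) (Uj p)"
proof -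
  assume pq: "p \<noteq> q"
  have "tri p q \<subseteq> Wj p"
  proof
    fix x assume "x \<in> tri p q"
    then have "x \<in> Dl" "x$p = 0" "x$q = 0" unfolding tri_def hull_ee by auto
    then show "x \<in> Wj p" using pq unfolding Wj_def by (intro CollectI conjI exI[of _ q]) auto
  qed
  then show ?thesis unfolding face_on_boundary_def boundary_Uj by (rule image_mono)
qed

lemma no4: "\<not> (\<exists>col. proper_face_colouring Kx ff 4 col)"
proof
  assume "\<exists>col. proper_face_colouring Kx ff 4 col"
  then obtain col where col: "proper_face_colouring Kx ff 4 col" by blast
  have B: "col (tri p q) < 4" if "p \<noteq> q" for p q
    using col tri_cf[OF that] unfolding proper_face_colouring_def by blast
  have D: "col (tri p q) \<noteq> col (tri p r)" if "p \<noteq> q" "p \<noteq> r" "q \<noteq> r" for p q r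
  proof -
    have "Uj p \<in> chambers Kx ff" using chambers_eq by simp
    then show ?thesis using col tri_cf[OF that(1)] tri_cf[OF that(2)] tri_ne[OF that] tri_bd[OF that(1)] tri_bd[OF that(2)]
      unfolding proper_face_colouring_def by blast
  qed
  have sw: "tri 1 0 = tri 0 1" "tri 2 0 = tri 0 2" "tri 3 0 = tri 0 3" "tri 4 0 = tri 0 4" "tri 2 1 = tri 1 2" "tri 3 1 = tri 1 3" "tri 4 1 = tri 1 4" "tri 3 2 = tri 2 3" "tri 4 2 = tri 2 4" "tri 4 3 = tri 3 4" by (simp_all add: tri_sym)
  have b0: "col (tri 0 1) < 4" by (rule B) simp
  have b1: "col (tri 0 2) < 4" by (rule B) simp
  have b2: "col (tri 0 3) < 4" by (rule B) simp
  have b3: "col (tri 0 4) < 4" by (rule B) simp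
  have b4: "col (tri 1 2) < 4" by (rule B) simp
  have b5: "col (tri 1 3) < 4" by (rule B) simp
  have b6: "col (tri 1 4) < 4" by (rule B) simp
  have b7: "col (tri 2 3) < 4" by (rule B) simp
  have b8: "col (tri 2 4) < 4" by (rule B) simp
  have b9: "col (tri 3 4) < 4" by (rule B) simp
  have d0: "col (tri 0 1) \<noteq> col (tri 0 2)" using D[of 0 1 2] sw by simp
  have d1: "col (tri 0 1) \<noteq> col (tri 0 3)" using D[of 0 1 3] sw by simp
  have d2: "col (tri 0 1) \<noteq> col (tri 0 4)" using D[of 0 1 4] sw by simp
  have d3: "col (tri 0 2) \<noteq> col (tri 0 3)" using D[of 0 2 3] sw by simp
  have d4: "col (tri 0 2) \<noteq> col (tri 0 4)" using D[of 0 2 4] sw by simp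
  have d5: "col (tri 0 3) \<noteq> col (tri 0 4)" using D[of 0 3 4] sw by simp
  have d6: "col (tri 0 1) \<noteq> col (tri 1 2)" using D[of 1 0 2] sw by simp
  have d7: "col (tri 0 1) \<noteq> col (tri 1 3)" using D[of 1 0 3] sw by simp
  have d8: "col (tri 0 1) \<noteq> col (tri 1 4)" using D[of 1 0 4] sw by simp
  have d9: "col (tri 1 2) \<noteq> col (tri 1 3)" using D[of 1 2 3] sw by simp
  have d10: "col (tri 1 2) \<noteq> col (tri 1 4)" using D[of 1 2 4] sw by simp
  have d11: "col (tri 1 3) \<noteq> col (tri 1 4)" using D[of 1 3 4] sw by simp
  have d12: "col (tri 0 2) \<noteq> col (tri 1 2)" using D[of 2 0 1] sw by simp
  have d13: "col (tri 0 2) \<noteq> col (tri 2 3)" using D[of 2 0 3] sw by simp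
  have d14: "col (tri 0 2) \<noteq> col (tri 2 4)" using D[of 2 0 4] sw by simp
  have d15: "col (tri 1 2) \<noteq> col (tri 2 3)" using D[of 2 1 3] sw by simp
  have d16: "col (tri 1 2) \<noteq> col (tri 2 4)" using D[of 2 1 4] sw by simp
  have d17: "col (tri 2 3) \<noteq> col (tri 2 4)" using D[of 2 3 4] sw by simp
  have d18: "col (tri 0 3) \<noteq> col (tri 1 3)" using D[of 3 0 1] sw by simp
  have d19: "col (tri 0 3) \<noteq> col (tri 2 3)" using D[of 3 0 2] sw by simp
  have d20: "col (tri 0 3) \<noteq> col (tri 3 4)" using D[of 3 0 4] sw by simp
  have d21: "col (tri 1 3) \<noteq> col (tri 2 3)" using D[of 3 1 2] sw by simp
  have d22: "col (tri 1 3) \<noteq> col (tri 3 4)" using D[of 3 1 4] sw by simp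
  have d23: "col (tri 2 3) \<noteq> col (tri 3 4)" using D[of 3 2 4] sw by simp
  have d24: "col (tri 0 4) \<noteq> col (tri 1 4)" using D[of 4 0 1] sw by simp
  have d25: "col (tri 0 4) \<noteq> col (tri 2 4)" using D[of 4 0 2] sw by simp
  have d26: "col (tri 0 4) \<noteq> col (tri 3 4)" using D[of 4 0 3] sw by simp
  have d27: "col (tri 1 4) \<noteq> col (tri 2 4)" using D[of 4 1 2] sw by simp
  have d28: "col (tri 1 4) \<noteq> col (tri 3 4)" using D[of 4 1 3] sw by simp
  have d29: "col (tri 2 4) \<noteq> col (tri 3 4)" using D[of 4 2 3] sw by simp
  show False using k5[of "col (tri 0 1)" "col (tri 0 2)" "col (tri 0 3)" "col (tri 0 4)" "col (tri 1 2)" "col (tri 1 3)" "col (tri 1 4)" "col (tri 2 3)" "col (tri 2 4)" "col (tri 3 4)"] b0 b1 b2 b3 b4 b5 b6 b7 b8 b9 d0 d1 d2 d3 d4 d5 d6 d7 d8 d9 d10 d11 d12 d13 d14 d15 d16 d17 d18 d19 d20 d21 d22 d23 d24 d25 d26 d27 d28 d29 by blast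
qed

end

lemma exists_emb: "\<exists>F G. emb F G"
proof -
  define one :: "real^5" where "one = (\<chi> i. 1)"
  have S0h: "S0 = {x. one \<bullet> x = 0}" by (simp add: S0_def one_def inner_vec_def)
  have one0: "one \<noteq> 0" by (simp add: one_def vec_eq_iff)
  have sub: "subspace S0" unfolding S0h by (rule subspace_hyperplane)
  have "dim S0 = 4" unfolding S0h using dim_hyperplane[OF one0] by simp
  moreover have "dim (UNIV :: (real^4) set) = 4" by (simp add: dim_UNIV)
  ultimately have d: "dim S0 = dim (UNIV :: (real^4) set)" by simp
  obtain F G where FG: "linear F" "linear G" "F ` S0 = (UNIV :: (real^4) set)" "G ` UNIV = S0"
    "\<And>x. x \<in> S0 \<Longrightarrow> G (F x) = x" "\<And>y. y \<in> UNIV \<Longrightarrow> F (G y) = y"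
    using isometries_subspaces[OF sub subspace_UNIV d] by metis
  have "emb F G" unfolding emb_def using FG by auto
  then show ?thesis by blast
qed

lemma part2: "\<exists>K f. triangulation_S3 K f \<and> (\<exists>c. proper_vertex_colouring K 5 c) \<and>
            \<not> (\<exists>col. proper_face_colouring K f 4 col)"
proof -
  obtain F G where "emb F G" using exists_emb by blast
  then interpret emb F G .
  show ?thesis using triang vcol no4 by blast
qed


theorem proposition7p4:
  shows "(\<forall>K f. triangulation_S3 K f \<and> (\<exists>c. proper_vertex_colouring K 5 c) \<longrightarrow>
            (\<exists>col. proper_face_colouring K f 5 col)) \<and>
         (\<exists>K f. triangulation_S3 K f \<and> (\<exists>c. proper_vertex_colouring K 5 c) \<and>
            \<not> (\<exists>col. proper_face_colouring K f 4 col))"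
proof
  show "\<forall>K f. triangulation_S3 K f \<and> (\<exists>c. proper_vertex_colouring K 5 c) \<longrightarrow>
            (\<exists>col. proper_face_colouring K f 5 col)"
    using part1 by blast
  show "\<exists>K f. triangulation_S3 K f \<and> (\<exists>c. proper_vertex_colouring K 5 c) \<and>
            \<not> (\<exists>col. proper_face_colouring K f 4 col)"
    by (rule part2)
qed

end
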